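(* For $\nu>0$ let $Q_\nu(x)=\frac1x+\frac{I_{\nu+1}(x)}{I_\nu(x)}$ for $x>0$. Then $Q_\nu$ is strictly decreasing on $\left(0,\sqrt{2\nu+4}\right)$ for every $\nu>0$, and $Q_\nu$ is strictly decreasing on $(0,\infty)$ for every $\nu\in\left(0,\tfrac12\right]$.
   Context: $I_\nu$ denotes the modified Bessel function of the first kind of order $\nu$. *)

theory Defs
  imports "HOL-Analysis.Analysis"
begin

definition besselI :: "real \<Rightarrow> real \<Rightarrow> real" where
  "besselI nu x = (\<Sum>k. (x / 2) powr (2 * real k + nu) / (fact k * Gamma (real k + nu + 1)))"

definition Qnu :: "real \<Rightarrow> real \<Rightarrow> real" where
  "Qnu nu x = 1 / x + besselI (nu + 1) x / besselI nu x"

end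

theory Submission
  imports Defs
begin


definition cc :: "real \<Rightarrow> nat \<Rightarrow> real" where
  "cc mu k = 1 / (fact k * Gamma (real k + mu + 1))"
definition FF :: "real \<Rightarrow> real \<Rightarrow> real" where
  "FF mu t = (\<Sum>k. cc mu k * t ^ k)"

lemma Gamma_ge: assumes "mu \<ge> 0" shows "Gamma (real k + mu + 1) \<ge> Gamma (mu + 1)"
proof -
  have "mu + 1 > 0" using assms by simp
  then have nz: "mu + 1 \<notin> \<int>\<^sub>\<le>\<^sub>0" by (auto elim!: nonpos_Ints_cases)
  have p: "pochhammer (mu+1) k = Gamma (mu + 1 + of_nat k) / Gamma (mu+1)"
    by (rule pochhammer_Gamma[OF nz])
  have "pochhammer (mu+1) k \<ge> 1"
    unfolding pochhammer_prod using assms by (intro prod_ge_1) auto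
  moreover have G: "Gamma (mu+1) > 0" using assms by simp
  ultimately have "Gamma (mu + 1 + of_nat k) \<ge> Gamma (mu+1)" unfolding p by (simp add: le_divide_eq)
  moreover have "real k + mu + 1 = mu + 1 + of_nat k" by simp
  ultimately show ?thesis by metis
qed

lemma cc_pos: "mu \<ge> 0 \<Longrightarrow> cc mu k > 0"
  unfolding cc_def by (simp add: add_pos_nonneg)

lemma summable_cc: assumes "mu \<ge> 0" shows "summable (\<lambda>k. cc mu k * y ^ k)"
proof (rule summable_comparison_test)
  show "summable (\<lambda>k. inverse (fact k) * \<bar>y\<bar>^k / Gamma (mu + 1))"
    by (intro summable_divide summable_exp)
  show "\<exists>N. \<forall>n\<ge>N. norm (cc mu n * y ^ n) \<le> inverse (fact n) * \<bar>y\<bar> ^ n / Gamma (mu + 1)"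
  proof (intro exI allI impI)
    fix n :: nat
    have g: "Gamma (mu+1) > 0" "Gamma (real n + mu + 1) \<ge> Gamma (mu+1)" using assms Gamma_ge by auto
    have g3: "Gamma (real n + mu + 1) > 0" using g by linarith
    have "norm (cc mu n * y ^ n) = \<bar>y\<bar>^n / (fact n * Gamma (real n + mu + 1))"
      using g3 by (simp add: cc_def abs_mult power_abs)
    also have "\<dots> \<le> \<bar>y\<bar>^n / (fact n * Gamma (mu + 1))"
      using g by (intro divide_left_mono mult_left_mono mult_pos_pos) auto
    finally show "norm (cc mu n * y ^ n) \<le> inverse (fact n) * \<bar>y\<bar> ^ n / Gamma (mu + 1)"
      by (simp add: field_simps)
  qed
qed

lemma diffs_cc: assumes "mu \<ge> 0" shows "diffs (cc mu) = cc (mu + 1)"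
proof
  fix n
  define g where "g = Gamma (real n + (mu + 1) + 1)"
  have g: "g > 0" using assms unfolding g_def by (intro Gamma_real_pos) linarith
  have f: "fact n > (0::real)" by simp
  have A: "real (Suc n) > 0" by simp
  have gg: "Gamma (real (Suc n) + mu + 1) = g" unfolding g_def by (simp add: algebra_simps)
  have "diffs (cc mu) n = real (Suc n) * (1 / (real (Suc n) * fact n * g))"
    unfolding diffs_def cc_def gg fact_Suc by simp
  also have "\<dots> = 1 / (fact n * g)"
    using g f A by simp
  finally show "diffs (cc mu) n = cc (mu+1) n"
    unfolding cc_def g_def .
qed

lemma FF_deriv: assumes "mu \<ge> 0" shows "(FF mu has_real_derivative FF (mu+1) t) (at t)"
proof -
  have s: "\<And>y. summable (\<lambda>n. cc mu n * y^n)" by (rule summable_cc[OF assms])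
  have "((\<lambda>x. \<Sum>n. cc mu n * x^n) has_field_derivative (\<Sum>n. diffs (cc mu) n * t^n)) (at t)"
    by (rule termdiffs_strong_converges_everywhere[OF s])
  then have "((\<lambda>x. \<Sum>n. cc mu n * x^n) has_field_derivative (\<Sum>n. cc (mu+1) n * t^n)) (at t)"
    by (simp only: diffs_cc[OF assms])
  then show ?thesis unfolding FF_def[abs_def] .
qed

lemma Gpl: assumes "z > (0::real)" shows "Gamma (z + 1) = z * Gamma z"
proof -
  have "z \<notin> \<int>\<^sub>\<le>\<^sub>0" using assms by (auto elim!: nonpos_Ints_cases)
  then show ?thesis by (rule Gamma_plus1)
qed

lemma ar_lem: fixes A B g z m :: real
  assumes as: "A > 0" "B > 0" "g > 0" "z > 0" "z - m = A"
  shows "1 / (A * B * g) - m * (1 / (A * B * (z * g))) = 1 / (B * (z * g))"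
proof -
  have eq: "1 / (A * B * g) = z / (A * B * (z * g))" using as(4) by simp
  have "1 / (A * B * g) - m * (1 / (A * B * (z * g))) = z / (A * B * (z * g)) - m / (A * B * (z * g))"
    unfolding eq by simp
  also have "\<dots> = (z - m) / (A * B * (z * g))" by (rule diff_divide_distrib[symmetric])
  also have "\<dots> = A / (A * (B * (z * g)))" unfolding as(5) by (simp add: mult.assoc)
  also have "\<dots> = 1 / (B * (z * g))" using as(1) by simp
  finally show ?thesis .
qed

lemma cc_rec: assumes "mu \<ge> 0"
  shows "cc mu (Suc j) - (mu+1) * cc (mu+1) (Suc j) = cc (mu+2) j"
proof -
  define z where "z = real j + mu + 2"
  have z: "z > 0" using assms by (simp add: z_def)
  have G: "Gamma (z+1) = z * Gamma z" using Gpl[OF z] .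
  have Gp: "Gamma z > 0" using z by simp
  have a1: "real (Suc j) + mu + 1 = z" by (simp add: z_def)
  have a2: "real (Suc j) + (mu + 1) + 1 = z + 1" by (simp add: z_def)
  have a3: "real j + (mu + 2) + 1 = z + 1" by (simp add: z_def)
  have fs: "fact (Suc j) = (real j + 1) * fact j" by (simp add: fact_Suc)
  have e1: "cc mu (Suc j) = 1 / ((real j + 1) * fact j * Gamma z)"
    unfolding cc_def a1 fs ..
  have e2: "cc (mu+1) (Suc j) = 1 / ((real j + 1) * fact j * Gamma (z+1))"
    unfolding cc_def a2 fs ..
  have e3: "cc (mu+2) j = 1 / (fact j * Gamma (z+1))"
    unfolding cc_def a3 ..
  have B: "fact j > (0::real)" by simp
  have A: "real j + 1 > 0" by simp
  have zA: "z - (mu + 1) = real j + 1" by (simp add: z_def)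
  show ?thesis unfolding e1 e2 e3 G using ar_lem[OF A B Gp z zA] .
qed

lemma cc0: assumes "mu \<ge> 0" shows "cc mu 0 - (mu+1) * cc (mu+1) 0 = 0"
proof -
  have "Gamma (mu + 1 + 1) = (mu+1) * Gamma (mu+1)" using assms by (intro Gpl) simp
  moreover have "Gamma (mu+1) > 0" using assms by simp
  ultimately show ?thesis by (simp add: cc_def add.assoc)
qed

lemma FF_rec: assumes "mu \<ge> 0"
  shows "t * FF (mu+2) t = FF mu t - (mu+1) * FF (mu+1) t"
proof -
  define d where "d k = (cc mu k - (mu+1) * cc (mu+1) k) * t ^ k" for k
  have s1: "d sums (FF mu t - (mu+1) * FF (mu+1) t)"
  proof -
    have a: "(\<lambda>k. cc mu k * t^k) sums FF mu t" unfolding FF_def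
      using summable_cc[OF assms] by (rule summable_sums)
    have b: "(\<lambda>k. cc (mu+1) k * t^k) sums FF (mu+1) t" unfolding FF_def
      using summable_cc[of "mu+1"] assms by (intro summable_sums) auto
    show ?thesis unfolding d_def using sums_diff[OF a sums_mult[OF b, of "mu+1"]]
      by (simp add: algebra_simps)
  qed
  have s2: "(\<lambda>j. d (Suc j)) sums (t * FF (mu+2) t)"
  proof -
    have b: "(\<lambda>k. cc (mu+2) k * t^k) sums FF (mu+2) t" unfolding FF_def
      using summable_cc[of "mu+2"] assms by (intro summable_sums) auto
    have "(\<lambda>j. d (Suc j)) = (\<lambda>j. t * (cc (mu+2) j * t^j))"
      unfolding d_def cc_rec[OF assms] by (auto simp: algebra_simps)
    then show ?thesis using sums_mult[OF b, of t] by simp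
  qed
  have "d 0 = 0" unfolding d_def using cc0[OF assms] by simp
  with s2 have "d sums (t * FF (mu+2) t)" using sums_Suc_iff by (metis add.right_neutral)
  then show ?thesis using s1 sums_unique2 by blast
qed

lemma FF0: "FF mu 0 = 1 / Gamma (mu + 1)"
  unfolding FF_def using powser_zero[of "cc mu"] by (simp add: cc_def)

lemma FF_pos: assumes "mu \<ge> 0" "t \<ge> 0" shows "FF mu t > 0"
  unfolding FF_def
proof (rule suminf_pos2[where i=0])
  show "summable (\<lambda>k. cc mu k * t ^ k)" using summable_cc[OF assms(1)] .
  show "0 \<le> cc mu n * t ^ n" for n using cc_pos[OF assms(1), of n] assms(2) by simp
  show "0 < cc mu 0 * t ^ 0" using cc_pos[OF assms(1), of 0] by simp
qed


lemma FF_deriv2: assumes "mu \<ge> 0" shows "(FF (mu+1) has_real_derivative FF (mu+2) t) (at t)"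
proof -
  have e: "mu + 1 + 1 = mu + 2" by simp
  have "(FF (mu+1) has_real_derivative FF (mu+1+1) t) (at t)" using FF_deriv[of "mu+1" t] assms by simp
  then show ?thesis unfolding e .
qed

lemma idH: fixes nu s f g h :: real assumes "s*h = f - (nu+1)*g"
 shows "(nu+1/2)*((2* s+nu+1)*g^2 + (2*nu+1)*f*g - 2*f^2) + s*(2*g^2 + 2*(2* s+nu+1)*g*h + (2*nu+1)*(g*g+f*h) - 4*f*g) = (2*nu+3)/2 * g * (s*h)"
  using assms by algebra
lemma idD: fixes nu s f g h :: real assumes "s*h = f - (nu+1)*g"
 shows "(nu+1)*(f^2 - (nu+1)*f*g - s*g^2) + s*(2*f*g - (nu+1)*(g*g+f*h) - g^2 - 2* s*g*h) = - s * g^2"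
  using assms by algebra
lemma idP: fixes nu s f g h :: real assumes "s*h = f - (nu+1)*g"
 shows "2*f*g + 2*(2*nu+1)*(f*g + s*g^2 + s*f*h) + 8* s*g^2 + 8* s^2*g*h - 4*f^2 - 8* s*f*g = -2*(1-2*nu)*(f^2 - (nu+1)*f*g - s*g^2)"
  using assms by algebra

lemma powr_split: assumes "s > (0::real)" shows "s powr a = s powr (a - 1) * s"
  using powr_add[of s "a - 1" 1] assms by simp

lemma H_pos:
  assumes nu: "nu > 0" and t: "t > 0"
  shows "(2*t+nu+1)*FF (nu+1) t ^2 + (2*nu+1)*FF nu t*FF (nu+1) t - 2*FF nu t^2 > 0"
proof -
  define f where "f = FF nu"
  define g where "g = FF (nu+1)"
  define h where "h = FF (nu+2)"
  have df: "(f has_real_derivative g s) (at s)" for s unfolding f_def g_def using FF_deriv nu by simp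
  have dg: "(g has_real_derivative h s) (at s)" for s unfolding g_def h_def using FF_deriv2 nu by simp
  have rel: "s * h s = f s - (nu+1) * g s" for s unfolding f_def g_def h_def using FF_rec nu by simp
  have gp: "s \<ge> 0 \<Longrightarrow> g s > 0" for s unfolding g_def using FF_pos nu by simp
  have hp: "s \<ge> 0 \<Longrightarrow> h s > 0" for s unfolding h_def using FF_pos nu by simp
  define a where "a = nu + 1/2"
  define Hf where "Hf s = (2* s+nu+1)*g s^2 + (2*nu+1)*f s*g s - 2*f s^2" for s
  define Hd where "Hd s = 2*g s^2 + 2*(2* s+nu+1)*g s*h s + (2*nu+1)*(g s*g s+f s*h s) - 4*f s*g s" for s
  have dH: "(Hf has_real_derivative Hd s) (at s)" for s
    unfolding Hf_def[abs_def] Hd_def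
    by (auto intro!: derivative_eq_intros df dg simp: algebra_simps power2_eq_square)
  define W where "W s = s powr a * Hf s" for s
  have "W 0 < W t"
  proof (rule DERIV_pos_imp_increasing_open[OF t])
    fix s :: real assume s: "0 < s" "s < t"
    have "(W has_real_derivative (a * s powr (a - 1)) * Hf s + Hd s * s powr a) (at s)"
      unfolding W_def[abs_def] by (rule DERIV_mult[OF has_real_derivative_powr[OF s(1)] dH])
    moreover have "(a * s powr (a - 1)) * Hf s + Hd s * s powr a = s powr (a - 1) * (a * Hf s + s * Hd s)"
      using powr_split[OF s(1), of a] by (simp add: algebra_simps)
    moreover have "a * Hf s + s * Hd s = (2*nu+3)/2 * g s * (s * h s)"
      unfolding a_def Hf_def Hd_def by (rule idH[OF rel])
    moreover have "(2*nu+3)/2 * g s * (s * h s) > 0" using gp[of s] hp[of s] s nu by simp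
    ultimately show "\<exists>y. (W has_real_derivative y) (at s) \<and> y > 0" using s by auto
  next
    have cH: "continuous_on {0..t} Hf"
      using dH by (meson DERIV_isCont continuous_at_imp_continuous_on)
    have cp: "continuous_on {0..t} (\<lambda>s. s powr a)"
      by (rule continuous_on_powr') (auto simp: a_def nu intro: continuous_intros add_pos_pos nu)
    show "continuous_on {0..t} W" unfolding W_def[abs_def]
      by (rule continuous_on_mult[OF cp cH])
  qed
  then have "t powr a * Hf t > 0" unfolding W_def by simp
  then have "Hf t > 0" using t by (simp add: zero_less_mult_iff)
  then show ?thesis unfolding Hf_def f_def g_def .
qed


lemma D_neg:
  assumes nu: "nu > 0" and t: "t > 0"
  shows "FF nu t ^2 - (nu+1)*FF nu t*FF (nu+1) t - t*FF (nu+1) t^2 < 0"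
proof -
  define f where "f = FF nu"
  define g where "g = FF (nu+1)"
  define h where "h = FF (nu+2)"
  have df: "(f has_real_derivative g s) (at s)" for s unfolding f_def g_def using FF_deriv nu by simp
  have dg: "(g has_real_derivative h s) (at s)" for s unfolding g_def h_def using FF_deriv2 nu by simp
  have rel: "s * h s = f s - (nu+1) * g s" for s unfolding f_def g_def h_def using FF_rec nu by simp
  have gp: "s \<ge> 0 \<Longrightarrow> g s > 0" for s unfolding g_def using FF_pos nu by simp
  define a where "a = nu + 1"
  define Df where "Df s = f s^2 - (nu+1)*f s*g s - s*g s^2" for s
  define Dd where "Dd s = 2*f s*g s - (nu+1)*(g s*g s+f s*h s) - g s^2 - 2 * s*g s*h s" for s
  have dD: "(Df has_real_derivative Dd s) (at s)" for s
    unfolding Df_def[abs_def] Dd_def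
    by (auto intro!: derivative_eq_intros df dg simp: algebra_simps power2_eq_square)
  define W where "W s = s powr a * Df s" for s
  have "W t < W 0"
  proof (rule DERIV_neg_imp_decreasing_open[OF t])
    fix s :: real assume s: "0 < s" "s < t"
    have "(W has_real_derivative (a * s powr (a - 1)) * Df s + Dd s * s powr a) (at s)"
      unfolding W_def[abs_def] by (rule DERIV_mult[OF has_real_derivative_powr[OF s(1)] dD])
    moreover have "(a * s powr (a - 1)) * Df s + Dd s * s powr a = s powr (a - 1) * (a * Df s + s * Dd s)"
      using powr_split[OF s(1), of a] by (simp add: algebra_simps)
    moreover have "a * Df s + s * Dd s = - s * g s^2"
      unfolding a_def Df_def Dd_def by (rule idD[OF rel])
    moreover have "- s * g s^2 < 0" using gp[of s] s by simp
    ultimately show "\<exists>y. (W has_real_derivative y) (at s) \<and> y < 0" using s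
      by (auto simp: mult_pos_neg)
  next
    have cH: "continuous_on {0..t} Df"
      using dD by (meson DERIV_isCont continuous_at_imp_continuous_on)
    have cp: "continuous_on {0..t} (\<lambda>s. s powr a)"
      by (rule continuous_on_powr') (auto simp: a_def nu intro: continuous_intros add_pos_pos nu)
    show "continuous_on {0..t} W" unfolding W_def[abs_def]
      by (rule continuous_on_mult[OF cp cH])
  qed
  then have "t powr a * Df t < 0" unfolding W_def by simp
  then have "Df t < 0" using t by (simp add: mult_less_0_iff)
  then show ?thesis unfolding Df_def f_def g_def .
qed

lemma P_pos:
  assumes nu: "nu > 0" "nu \<le> 1/2" and t: "t > 0"
  shows "FF nu t^2 + 2*(2*nu+1)*t*FF nu t*FF (nu+1) t + 4*t^2*FF (nu+1) t^2 - 4*t*FF nu t^2 > 0"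
proof -
  define f where "f = FF nu"
  define g where "g = FF (nu+1)"
  define h where "h = FF (nu+2)"
  have df: "(f has_real_derivative g s) (at s)" for s unfolding f_def g_def using FF_deriv nu by simp
  have dg: "(g has_real_derivative h s) (at s)" for s unfolding g_def h_def using FF_deriv2 nu by simp
  have rel: "s * h s = f s - (nu+1) * g s" for s unfolding f_def g_def h_def using FF_rec nu by simp
  define Pf where "Pf s = f s^2 + 2*(2*nu+1)* s*f s*g s + 4* s^2*g s^2 - 4* s*f s^2" for s
  define Pd where "Pd s = 2*f s*g s + 2*(2*nu+1)*(f s*g s + s*g s^2 + s*f s*h s) + 8* s*g s^2 + 8* s^2*g s*h s - 4*f s^2 - 8* s*f s*g s" for s
  have dP: "(Pf has_real_derivative Pd s) (at s)" for s
    unfolding Pf_def[abs_def] Pd_def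
    by (auto intro!: derivative_eq_intros df dg simp: algebra_simps power2_eq_square)
  have "Pf 0 \<le> Pf t"
  proof (rule DERIV_nonneg_imp_increasing_open[of 0 t Pf])
    show "0 \<le> t" using t by simp
    fix s :: real assume s: "0 < s" "s < t"
    have "Pd s = -2*(1-2*nu)*(f s^2 - (nu+1)*f s*g s - s*g s^2)"
      unfolding Pd_def by (rule idP[OF rel])
    moreover have "f s^2 - (nu+1)*f s*g s - s*g s^2 < 0"
      using D_neg[OF nu(1) s(1)] unfolding f_def g_def .
    moreover have "1 - 2*nu \<ge> 0" using nu by simp
    ultimately have "Pd s \<ge> 0" by (simp add: mult_nonneg_nonpos mult_nonpos_nonpos)
    then show "\<exists>y. (Pf has_real_derivative y) (at s) \<and> y \<ge> 0" using dP by blast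
  next
    show "continuous_on {0..t} Pf"
      using dP by (meson DERIV_isCont continuous_at_imp_continuous_on)
  qed
  moreover have "Pf 0 > 0" unfolding Pf_def f_def using FF_pos[of nu 0] nu by simp
  ultimately have "Pf t > 0" by linarith
  then show ?thesis unfolding Pf_def f_def g_def .
qed

lemma psi_neg: fixes d w :: real assumes d: "d > 1" and w: "d < w" "w < (2*d-1)*(d+1)"
  shows "2*d^4*(1-2*d) + (w-d)*(w^2 - d*w + d^2 - 4*d^4) < 0"
proof (cases "w^2 - d*w + d^2 - 4*d^4 \<le> 0")
  case True
  have "(w-d)*(w^2 - d*w + d^2 - 4*d^4) \<le> 0" using True w by (simp add: mult_nonneg_nonpos)
  moreover have "2*d^4*(1-2*d) < 0" using d by (simp add: mult_pos_neg)
  ultimately show ?thesis by linarith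
next
  case False
  define w1 where "w1 = (2*d-1)*(d+1)"
  have q: "w^2 - d*w + d^2 - 4*d^4 \<le> w1^2 - d*w1 + d^2 - 4*d^4"
  proof -
    have "w1^2 - d*w1 - (w^2 - d*w) = (w1 - w)*(w1 + w - d)" by (simp add: algebra_simps power2_eq_square)
    moreover have "(w1 - w)*(w1 + w - d) \<ge> 0" using w d unfolding w1_def by (intro mult_nonneg_nonneg) auto
    ultimately show ?thesis by linarith
  qed
  have "(w-d)*(w^2 - d*w + d^2 - 4*d^4) \<le> (w1-d)*(w1^2 - d*w1 + d^2 - 4*d^4)"
    using False q w unfolding w1_def by (intro mult_mono) auto
  moreover have "2*d^4*(1-2*d) + (w1-d)*(w1^2 - d*w1 + d^2 - 4*d^4) = -4*d^4 - 4*d^3 + 5*d^2 + d - 1"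
    unfolding w1_def by algebra
  moreover have "-4*d^4 - 4*d^3 + 5*d^2 + d - 1 < (0::real)"
  proof -
    have "d^2 \<le> d^4" using d by (simp add: power_increasing)
    moreover have "d \<le> d^3" using power_increasing[of 1 3 d] d by simp
    moreover have "d^2 \<le> d^3" using power_increasing[of 2 3 d] d by simp
    moreover have "d^3 > 0" using d by simp
    ultimately show ?thesis by linarith
  qed
  ultimately show ?thesis by linarith
qed

lemma final_alg: fixes a t f g :: real
  assumes a: "a > 0" and t: "t > 0" "2*t < a+2" and f: "f > 0" and g: "g > 0"
  and H: "(2*t+a+1)*g^2 + (2*a+1)*f*g - 2*f^2 > 0"
  shows "f^2 + 2*(2*a+1)*t*f*g + 4*t^2*g^2 - 4*t*f^2 > 0"
proof (rule ccontr)
  define P where "P = f^2 + 2*(2*a+1)*t*f*g + 4*t^2*g^2 - 4*t*f^2"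
  define HH where "HH = (2*t+a+1)*g^2 + (2*a+1)*f*g - 2*f^2"
  assume "\<not> ?thesis"
  then have P: "P \<le> 0" unfolding P_def by simp
  define d where "d = a + 1"
  define c where "c = 2*a + 1"
  define w where "w = 2*c*t"
  have d1: "d > 1" and c0: "c > 0" and cd: "c = 2*d - 1" using a by (auto simp: d_def c_def)
  have w0: "w > 0" using c0 t by (simp add: w_def)
  have iden: "(2*t+d)*P = 4*t^2*HH + f*((d - w)*f + d*w*g)"
    unfolding P_def HH_def d_def w_def c_def by algebra
  have "(2*t+d)*P \<le> 0" using P t d1 by (simp add: mult_nonneg_nonpos)
  moreover have "4*t^2*HH > 0" using H t unfolding HH_def by simp
  ultimately have "f*((d - w)*f + d*w*g) < 0" using iden by linarith
  then have K: "(d - w)*f + d*w*g < 0" using f by (simp add: mult_less_0_iff)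
  have G0: "d*w*g > 0" using d1 w0 g by simp
  have GF: "d*w*g < (w-d)*f" using K by (simp add: algebra_simps)
  have wd: "w > d" using G0 GF f by (smt (verit) mult_nonpos_nonneg)
  have key: "(d*w)^2 * HH = (2*t+d)*(d*w*g)^2 + c*d*w*f*(d*w*g) - 2*d^2*w^2*f^2"
    unfolding HH_def d_def c_def by algebra
  have "(2*t+d)*(d*w*g)^2 < (2*t+d)*((w-d)*f)^2"
    using G0 GF t d1 by (intro mult_strict_left_mono power_strict_mono) auto
  moreover have "c*d*w*f*(d*w*g) < c*d*w*f*((w-d)*f)"
    using GF c0 d1 w0 f by (intro mult_strict_left_mono) auto
  ultimately have lt: "(d*w)^2 * HH < f^2 * ((2*t+d)*(w-d)^2 + c*d*w*(w-d) - 2*d^2*w^2)"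
    unfolding key by (simp add: algebra_simps power2_eq_square)
  have ct: "c*(2*t) = w" unfolding w_def by simp
  have psi: "c*((2*t+d)*(w-d)^2 + c*d*w*(w-d) - 2*d^2*w^2) = 2*d^4*(1-2*d) + (w-d)*(w^2 - d*w + d^2 - 4*d^4)"
  proof -
    have "c*((2*t+d)*(w-d)^2 + c*d*w*(w-d) - 2*d^2*w^2) = (c*(2*t) + c*d)*(w-d)^2 + c*(c*d*w*(w-d) - 2*d^2*w^2)"
      by (simp add: algebra_simps)
    also have "\<dots> = (w + c*d)*(w-d)^2 + c*(c*d*w*(w-d) - 2*d^2*w^2)" using ct by simp
    also have "\<dots> = 2*d^4*(1-2*d) + (w-d)*(w^2 - d*w + d^2 - 4*d^4)" unfolding cd by algebra
    finally show ?thesis .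
  qed
  have wlt: "w < (2*d-1)*(d+1)"
  proof -
    have "w = c * (2*t)" using ct by simp
    also have "\<dots> < c * (d+1)" using t c0 unfolding d_def by simp
    finally show ?thesis using cd by simp
  qed
  have "2*d^4*(1-2*d) + (w-d)*(w^2 - d*w + d^2 - 4*d^4) < 0" using psi_neg[OF d1 wd wlt] .
  then have "c*((2*t+d)*(w-d)^2 + c*d*w*(w-d) - 2*d^2*w^2) < 0" using psi by simp
  then have "(2*t+d)*(w-d)^2 + c*d*w*(w-d) - 2*d^2*w^2 < 0" using c0
    by (simp add: mult_less_0_iff)
  then have "f^2 * ((2*t+d)*(w-d)^2 + c*d*w*(w-d) - 2*d^2*w^2) < 0" using f by (simp add: mult_pos_neg)
  moreover have "(d*w)^2 * HH > 0" using H d1 w0 unfolding HH_def by simp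
  ultimately show False using lt by linarith
qed
lemma Qsign: fixes x f g h nu :: real
  assumes x: "x > 0" and f: "f > 0" and rel: "(x^2/4)*h = f - (nu+1)*g"
  and P: "f^2 + 2*(2*nu+1)*(x^2/4)*f*g + 4*(x^2/4)^2*g^2 - 4*(x^2/4)*f^2 > 0"
  shows "- (1 / x^2) + ((1/2 * g + x/2 * (h * (x/2))) * f - x/2 * g * (g * (x/2))) / (f * f) < 0"
proof -
  define PP where "PP = f^2 + 2*(2*nu+1)*(x^2/4)*f*g + 4*(x^2/4)^2*g^2 - 4*(x^2/4)*f^2"
  have "(- (1 / x^2) + ((1/2 * g + x/2 * (h * (x/2))) * f - x/2 * g * (g * (x/2))) / (f * f)) * (x^2 * (f*f))
     = x^2 * ((1/2 * g + x/2 * (h * (x/2))) * f - x/2 * g * (g * (x/2))) - f^2"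
    using x f by (simp add: field_simps power2_eq_square)
  also have "\<dots> = - PP"
  proof -
    have rel4: "x^2*h = 4*f - 4*(nu+1)*g" using rel by (simp add: field_simps)
    have p: "x^2*(2*g*f + x^2*h*f - x^2*g^2) - 4*f^2 = -(4*f^2 + 2*(2*nu+1)*x^2*f*g + x^4*g^2 - 4*x^2*f^2)"
      using rel4 by algebra
    have l: "4*(x^2 * ((1/2 * g + x/2 * (h * (x/2))) * f - x/2 * g * (g * (x/2))) - f^2) = x^2*(2*g*f + x^2*h*f - x^2*g^2) - 4*f^2"
      by (simp add: field_simps power2_eq_square)
    have r: "4*PP = 4*f^2 + 2*(2*nu+1)*x^2*f*g + x^4*g^2 - 4*x^2*f^2"
      unfolding PP_def by (simp add: field_simps power2_eq_square power4_eq_xxxx)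
    have "4*(x^2 * ((1/2 * g + x/2 * (h * (x/2))) * f - x/2 * g * (g * (x/2))) - f^2) = 4 * (-PP)"
      unfolding l p using r by simp
    then show ?thesis by simp
  qed
  finally have e: "(- (1 / x^2) + ((1/2 * g + x/2 * (h * (x/2))) * f - x/2 * g * (g * (x/2))) / (f * f)) * (x^2 * (f*f)) = - PP" .
  have "PP > 0" using P unfolding PP_def .
  moreover have "x^2 * (f*f) > 0" using x f by simp
  ultimately show ?thesis using e by (metis mult_pos_pos neg_less_0_iff_less not_less_iff_gr_or_eq linorder_not_less mult_nonneg_nonneg less_imp_le zero_less_mult_iff)
qed
lemma besselI_eq: assumes mu: "mu \<ge> 0" and x: "x > 0"
  shows "besselI mu x = (x/2) powr mu * FF mu (x^2/4)"
proof -
  have x2: "x/2 > 0" using x by simp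
  have tm: "(x/2) powr (2 * real k + mu) / (fact k * Gamma (real k + mu + 1))
      = (x/2) powr mu * (cc mu k * (x^2/4)^k)" for k
  proof -
    have "(x/2) powr (2 * real k + mu) = (x/2) powr (real (2*k)) * (x/2) powr mu"
      using powr_add[of "x/2" "real (2*k)" mu] by simp
    also have "(x/2) powr (real (2*k)) = (x/2)^(2*k)" using x2 by (rule powr_realpow)
    also have "(x/2)^(2*k) = (x^2/4)^k" by (simp add: power_mult power_divide)
    finally show ?thesis unfolding cc_def by simp
  qed
  have "besselI mu x = (\<Sum>k. (x/2) powr mu * (cc mu k * (x^2/4)^k))"
    unfolding besselI_def tm ..
  also have "\<dots> = (x/2) powr mu * FF mu (x^2/4)"
    unfolding FF_def by (rule suminf_mult[OF summable_cc[OF mu]])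
  finally show ?thesis .
qed

lemma Qnu_eq: assumes nu: "nu > 0" and x: "x > 0"
  shows "Qnu nu x = 1/x + x/2 * FF (nu+1) (x^2/4) / FF nu (x^2/4)"
proof -
  have x2: "x/2 > 0" using x by simp
  have pw: "(x/2) powr (nu+1) = (x/2) powr nu * (x/2)"
    using powr_add[of "x/2" nu 1] x2 by simp
  have b1: "besselI (nu+1) x = (x/2) powr nu * (x/2 * FF (nu+1) (x^2/4))"
    using besselI_eq[of "nu+1" x] nu x unfolding pw by simp
  have b0: "besselI nu x = (x/2) powr nu * FF nu (x^2/4)"
    using besselI_eq[of nu x] nu x by simp
  have c: "(x/2) powr nu \<noteq> 0" using x2 by simp
  have "besselI (nu+1) x / besselI nu x = x/2 * FF (nu+1) (x^2/4) / FF nu (x^2/4)"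
    unfolding b1 b0 using mult_divide_mult_cancel_left[OF c] by simp
  then show ?thesis unfolding Qnu_def by simp
qed

lemma Q_deriv_neg:
  assumes nu: "nu > 0" and x: "x > 0"
  and P: "FF nu (x^2/4)^2 + 2*(2*nu+1)*(x^2/4)*FF nu (x^2/4)*FF (nu+1) (x^2/4) + 4*(x^2/4)^2*FF (nu+1) (x^2/4)^2 - 4*(x^2/4)*FF nu (x^2/4)^2 > 0"
  shows "\<exists>y. ((\<lambda>x. 1/x + x/2 * FF (nu+1) (x^2/4) / FF nu (x^2/4)) has_real_derivative y) (at x) \<and> y < 0"
proof -
  define f where "f = FF nu"
  define g where "g = FF (nu+1)"
  define h where "h = FF (nu+2)"
  have df: "(f has_real_derivative g s) (at s)" for s unfolding f_def g_def using FF_deriv nu by simp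
  have dg: "(g has_real_derivative h s) (at s)" for s unfolding g_def h_def using FF_deriv2 nu by simp
  have rel: "s * h s = f s - (nu+1) * g s" for s unfolding f_def g_def h_def using FF_rec nu by simp
  have fp: "f (x^2/4) > 0" unfolding f_def using FF_pos nu by simp
  have dk: "((\<lambda>x. x^2/4) has_real_derivative x/2) (at x)"
    by (auto intro!: derivative_eq_intros)
  have dfk: "((\<lambda>x. f (x^2/4)) has_real_derivative g (x^2/4) * (x/2)) (at x)"
    by (rule DERIV_chain2[OF df dk])
  have dgk: "((\<lambda>x. g (x^2/4)) has_real_derivative h (x^2/4) * (x/2)) (at x)"
    by (rule DERIV_chain2[OF dg dk])
  have dN: "((\<lambda>x. x/2 * g (x^2/4)) has_real_derivative (1/2 * g (x^2/4) + x/2 * (h (x^2/4) * (x/2)))) (at x)"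
  proof -
    have dx: "((\<lambda>x. x/2) has_real_derivative 1/2) (at x)" by (auto intro!: derivative_eq_intros)
    have eq: "1/2 * g (x^2/4) + h (x^2/4) * (x/2) * (x/2) = 1/2 * g (x^2/4) + x/2 * (h (x^2/4) * (x/2))"
      by (simp add: algebra_simps)
    have "((\<lambda>x. x/2 * g (x^2/4)) has_real_derivative (1/2 * g (x^2/4) + h (x^2/4) * (x/2) * (x/2))) (at x)"
      by (rule DERIV_mult[OF dx dgk])
    then show ?thesis by (simp only: eq)
  qed
  have dQ: "((\<lambda>x. x/2 * g (x^2/4) / f (x^2/4)) has_real_derivative
      ((1/2 * g (x^2/4) + x/2 * (h (x^2/4) * (x/2))) * f (x^2/4) - x/2 * g (x^2/4) * (g (x^2/4) * (x/2))) / (f (x^2/4) * f (x^2/4))) (at x)"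
    using DERIV_divide[OF dN dfk] fp by simp
  have dI: "((\<lambda>x. 1/x) has_real_derivative - (1 / x^2)) (at x)"
    using x by (auto intro!: derivative_eq_intros simp: power2_eq_square)
  have dT: "((\<lambda>x. 1/x + x/2 * g (x^2/4) / f (x^2/4)) has_real_derivative
     - (1 / x^2) + ((1/2 * g (x^2/4) + x/2 * (h (x^2/4) * (x/2))) * f (x^2/4) - x/2 * g (x^2/4) * (g (x^2/4) * (x/2))) / (f (x^2/4) * f (x^2/4))) (at x)"
    by (rule DERIV_add[OF dI dQ])
  have neg: "- (1 / x^2) + ((1/2 * g (x^2/4) + x/2 * (h (x^2/4) * (x/2))) * f (x^2/4) - x/2 * g (x^2/4) * (g (x^2/4) * (x/2))) / (f (x^2/4) * f (x^2/4)) < 0"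
    by (rule Qsign[OF x fp rel]) (use P in \<open>simp add: f_def g_def\<close>)
  show ?thesis using dT neg unfolding f_def g_def by blast
qed

theorem mainTheorem11:
  shows "(\<forall>nu::real. nu > 0 \<longrightarrow>
            strict_antimono_on {0<..<sqrt (2 * nu + 4)} (Qnu nu)) \<and>
         (\<forall>nu::real. 0 < nu \<and> nu \<le> 1 / 2 \<longrightarrow>
            strict_antimono_on {0<..} (Qnu nu))"
proof (intro conjI allI impI)
  fix nu :: real assume nu: "nu > 0"
  define Qt where "Qt = (\<lambda>x. 1/x + x/2 * FF (nu+1) (x^2/4) / FF nu (x^2/4))"
  show "strict_antimono_on {0<..<sqrt (2 * nu + 4)} (Qnu nu)"
    unfolding monotone_on_def
  proof (intro ballI impI)
    fix x y assume x: "x \<in> {0<..<sqrt (2 * nu + 4)}" and y: "y \<in> {0<..<sqrt (2 * nu + 4)}" and xy: "x < y"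
    have "Qt x > Qt y"
    proof (rule DERIV_neg_imp_decreasing[OF xy])
      fix z assume z: "x \<le> z" "z \<le> y"
      have z0: "z > 0" using x z by simp
      have zs: "z < sqrt (2 * nu + 4)" using y z by simp
      have "z^2 < (sqrt (2 * nu + 4))^2" using zs z0 by (intro power_strict_mono) auto
      also have "(sqrt (2 * nu + 4))^2 = 2 * nu + 4" using nu by simp
      finally have z2: "2 * (z^2/4) < nu + 2" by simp
      have t: "z^2/4 > 0" using z0 by simp
      have P: "FF nu (z^2/4)^2 + 2*(2*nu+1)*(z^2/4)*FF nu (z^2/4)*FF (nu+1) (z^2/4) + 4*(z^2/4)^2*FF (nu+1) (z^2/4)^2 - 4*(z^2/4)*FF nu (z^2/4)^2 > 0"
        by (rule final_alg[OF nu t z2 FF_pos FF_pos H_pos[OF nu t]]) (use nu t in auto)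
      show "\<exists>d. (Qt has_real_derivative d) (at z) \<and> d < 0"
        unfolding Qt_def by (rule Q_deriv_neg[OF nu z0 P])
    qed
    moreover have "Qnu nu x = Qt x" "Qnu nu y = Qt y" unfolding Qt_def using Qnu_eq nu x y by auto
    ultimately show "Qnu nu y < Qnu nu x" by simp
  qed
next
  fix nu :: real assume nu2: "0 < nu \<and> nu \<le> 1 / 2"
  then have nu: "nu > 0" and nu12: "nu \<le> 1/2" by auto
  define Qt where "Qt = (\<lambda>x. 1/x + x/2 * FF (nu+1) (x^2/4) / FF nu (x^2/4))"
  show "strict_antimono_on {0<..} (Qnu nu)"
    unfolding monotone_on_def
  proof (intro ballI impI)
    fix x y :: real assume x: "x \<in> {0<..}" and y: "y \<in> {0<..}" and xy: "x < y"
    have "Qt x > Qt y"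
    proof (rule DERIV_neg_imp_decreasing[OF xy])
      fix z assume z: "x \<le> z" "z \<le> y"
      have z0: "z > 0" using x z by simp
      have t: "z^2/4 > 0" using z0 by simp
      have P: "FF nu (z^2/4)^2 + 2*(2*nu+1)*(z^2/4)*FF nu (z^2/4)*FF (nu+1) (z^2/4) + 4*(z^2/4)^2*FF (nu+1) (z^2/4)^2 - 4*(z^2/4)*FF nu (z^2/4)^2 > 0"
        by (rule P_pos[OF nu nu12 t])
      show "\<exists>d. (Qt has_real_derivative d) (at z) \<and> d < 0"
        unfolding Qt_def by (rule Q_deriv_neg[OF nu z0 P])
    qed
    moreover have "Qnu nu x = Qt x" "Qnu nu y = Qt y" unfolding Qt_def using Qnu_eq nu x y by auto
    ultimately show "Qnu nu y < Qnu nu x" by simp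
  qed
qed

end
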